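(* Let $\mathcal{U}$ be a separable Banach space with dual $\mathcal{U}^*$ and duality pairing $[\cdot,\cdot]$, with quadratic norm $\|u\|^2=[\mathcal{K}^{-1}u,u]$ given by an invertible symmetric positive linear map $\mathcal{K}:\mathcal{U}^*\to\mathcal{U}$. Let $\Omega\subseteq\mathbb{R}^d$ be bounded, consider the PDE $\mathcal{P}(u)(\mathbf{x})=f(\mathbf{x})$ for $\mathbf{x}\in\Omega$, $\mathcal{B}(u)(\mathbf{x})=g(\mathbf{x})$ for $\mathbf{x}\in\partial\Omega$, and suppose (Assumption) there exist bounded linear operators $L_1,\dots,L_Q\in\mathcal{L}(\mathcal{U};C(\Omega))$ with $L_1,\dots,L_{Q_b}\in\mathcal{L}(\mathcal{U};C(\partial\Omega))$ for some $1\le Q_b\le Q$, and maps $P:\mathbb{R}^Q\to\mathbb{R}$, $B:\mathbb{R}^{Q_b}\to\mathbb{R}$ (possibly nonlinear) with $\mathcal{P}(u)(\mathbf{x})=P(L_1(u)(\mathbf{x}),\dots,L_Q(u)(\mathbf{x}))$ for $\mathbf{x}\in\Omega$ and $\mathcal{B}(u)(\mathbf{x})=B(L_1(u)(\mathbf{x}),\dots,L_{Q_b}(u)(\mathbf{x}))$ for $\mathbf{x}\in\partial\Omega$. With collocation points, $\boldsymbol{\phi}$, $N$, $\mathbf{y}$, $F$, $\Theta$ and $\chi_n$ as in the context, assume $\Theta$ is invertible. Then $u^\dagger$ is a minimizer of $$\min_{u\in\mathcal{U}}\|u\|\ \text{ s.t. }\ \mathcal{P}(u)(\mathbf{x}_m)=f(\mathbf{x}_m),\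 m=1,\dots,M_\Omega;\quad \mathcal{B}(u)(\mathbf{x}_m)=g(\mathbf{x}_m),\ m=M_\Omega+1,\dots,M,$$ if and only if $u^\dagger=\sum_{n=1}^N z^\dagger_n\chi_n$ where $\mathbf{z}^\dagger$ is a minimizer of $\min_{\mathbf{z}\in\mathbb{R}^N}\mathbf{z}^T\Theta^{-1}\mathbf{z}$ subject to $F(\mathbf{z})=\mathbf{y}$.
   Context: Collocation points: $\mathbf{x}_1,\dots,\mathbf{x}_{M_\Omega}\in\Omega$, $\mathbf{x}_{M_\Omega+1},\dots,\mathbf{x}_M\in\partial\Omega$. Define $\phi^{(q)}_m=\delta_{\mathbf{x}_m}\circ L_q\in\mathcal{U}^*$ for $1\le m\le M$ if $1\le q\le Q_b$, and for $1\le m\le M_\Omega$ if $Q_b<q\le Q$; let $\boldsymbol{\phi}^{(q)}$ be the vector of the $\phi^{(q)}_m$ and $\boldsymbol{\phi}=(\boldsymbol{\phi}^{(1)},\dots,\boldsymbol{\phi}^{(Q)})\in(\mathcal{U}^* )^{N}$ with $N=MQ_b+M_\Omega(Q-Q_b)$. $\mathbf{y}\in\mathbb{R}^M$ has $y_m=f(\mathbf{x}_m)$ for $m\le M_\Omega$ and $y_m=g(\mathbf{x}_m)$ for $m>M_\Omega$. $F:\mathbb{R}^N\to\mathbb{R}^M$ is defined by $(F([\boldsymbol{\phi},u]))_m=P([\phi^{(1)}_m,u],\dots,[\phi^{(Q)}_m,u])$ for $m\le M_\Omega$ and $=B([\phi^{(1)}_m,u],\dots,[\phi^{(Q_b)}_m,u])$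 for $m>M_\Omega$ (i.e. $F$ acts on $\mathbf{z}\in\mathbb{R}^N$ with entries indexed like $\boldsymbol{\phi}$). $\Theta_{i,n}=[\phi_i,\mathcal{K}\phi_n]$ where $\phi_i$ are the entries of $\boldsymbol{\phi}$, and the gamblets are $\chi_i=\sum_{n=1}^N(\Theta^{-1})_{i,n}\mathcal{K}\phi_n$. The constraints of the minimization problem are thus equivalent to $F([\boldsymbol{\phi},u])=\mathbf{y}$. *)

theory Defs
  imports "HOL-Analysis.Analysis"
begin

text \<open>Index set of the measurement functionals: the pair (q,m) stands for
  phi^(q)_m = delta_{x_m} o L_q; q ranges over 1..Q_b with m in 1..M, and
  over Q_b+1..Q with m in 1..M_Omega. Its cardinality is N = M Q_b + M_Omega (Q - Q_b).\<close>
definition colloc_idx :: "nat \<Rightarrow> nat \<Rightarrow> nat \<Rightarrow> nat \<Rightarrow> (nat \<times> nat) set" where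
  "colloc_idx Q Qb M MO =
     {(q, m). (1 \<le> q \<and> q \<le> Qb \<and> 1 \<le> m \<and> m \<le> M) \<or> (Qb < q \<and> q \<le> Q \<and> 1 \<le> m \<and> m \<le> MO)}"

definition colloc_phi ::
  "(nat \<Rightarrow> 'u::real_normed_vector \<Rightarrow> 'x \<Rightarrow> real) \<Rightarrow> (nat \<Rightarrow> 'x) \<Rightarrow> nat \<times> nat \<Rightarrow> ('u \<Rightarrow>\<^sub>L real)" where
  "colloc_phi L X = (\<lambda>(q, m). Blinfun (\<lambda>u. L q u (X m)))"

definition Theta :: "(('u::real_normed_vector \<Rightarrow>\<^sub>L real) \<Rightarrow> 'u) \<Rightarrow> ('i \<Rightarrow> ('u \<Rightarrow>\<^sub>L real)) \<Rightarrow> 'i \<Rightarrow> 'i \<Rightarrow> real" where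
  "Theta K phi i n = blinfun_apply (phi i) (K (phi n))"

definition gamblet ::
  "'i set \<Rightarrow> (('u::real_normed_vector \<Rightarrow>\<^sub>L real) \<Rightarrow> 'u) \<Rightarrow> ('i \<Rightarrow> ('u \<Rightarrow>\<^sub>L real)) \<Rightarrow> ('i \<Rightarrow> 'i \<Rightarrow> real) \<Rightarrow> 'i \<Rightarrow> 'u" where
  "gamblet I K phi Thinv i = (\<Sum>n\<in>I. Thinv i n *\<^sub>R K (phi n))"

definition quad_form :: "'i set \<Rightarrow> ('i \<Rightarrow> 'i \<Rightarrow> real) \<Rightarrow> ('i \<Rightarrow> real) \<Rightarrow> real" where
  "quad_form I A z = (\<Sum>i\<in>I. \<Sum>j\<in>I. z i * A i j * z j)"

definition Fmap ::
  "(real list \<Rightarrow> real) \<Rightarrow> (real list \<Rightarrow> real) \<Rightarrow> nat \<Rightarrow> nat \<Rightarrow> nat \<Rightarrow> (nat \<times> nat \<Rightarrow> real) \<Rightarrow> nat \<Rightarrow> real" where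
  "Fmap P B Q Qb MO z m =
     (if m \<le> MO then P (map (\<lambda>q. z (q, m)) [1..<Q+1]) else B (map (\<lambda>q. z (q, m)) [1..<Qb+1]))"

definition ydata :: "('x \<Rightarrow> real) \<Rightarrow> ('x \<Rightarrow> real) \<Rightarrow> (nat \<Rightarrow> 'x) \<Rightarrow> nat \<Rightarrow> nat \<Rightarrow> real" where
  "ydata f g X MO m = (if m \<le> MO then f (X m) else g (X m))"

definition F_eq_y ::
  "(real list \<Rightarrow> real) \<Rightarrow> (real list \<Rightarrow> real) \<Rightarrow> nat \<Rightarrow> nat \<Rightarrow> nat \<Rightarrow> nat \<Rightarrow> (nat \<Rightarrow> real) \<Rightarrow> (nat \<times> nat \<Rightarrow> real) \<Rightarrow> bool" where
  "F_eq_y P B Q Qb M MO y z \<longleftrightarrow> (\<forall>m\<in>{1..M}. Fmap P B Q Qb MO z m = y m)"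

end

theory Submission
  imports Defs
begin

lemma pyth:
  fixes K :: "('u::real_normed_vector \<Rightarrow>\<^sub>L real) \<Rightarrow> 'u"
  assumes lin: "linear K" and bij: "bij K"
    and sym: "\<forall>\<phi> \<psi>. blinfun_apply \<phi> (K \<psi>) = blinfun_apply \<psi> (K \<phi>)"
    and nrm: "\<forall>u. (norm u)\<^sup>2 = blinfun_apply (inv K u) u"
    and w0: "blinfun_apply \<psi> w = 0"
  shows "(norm (K \<psi> + w))\<^sup>2 = (norm (K \<psi>))\<^sup>2 + (norm w)\<^sup>2"
proof -
  have i1: "inv K (K a) = a" for a using bij by (simp add: bij_is_inj)
  have i2: "K (inv K a) = a" for a using bij by (simp add: bij_is_surj surj_f_inv_f)
  have "K (\<psi> + inv K w) = K \<psi> + w" using lin i2 by (simp add: linear_add)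
  hence e: "inv K (K \<psi> + w) = \<psi> + inv K w" using i1 by metis
  have s: "blinfun_apply (inv K w) (K \<psi>) = 0"
    using sym i2 w0 by metis
  have "(norm (K \<psi> + w))\<^sup>2 = blinfun_apply (\<psi> + inv K w) (K \<psi> + w)"
    using nrm e by simp
  also have "\<dots> = blinfun_apply \<psi> (K \<psi>) + blinfun_apply (inv K w) w"
    using s w0 by (simp add: plus_blinfun.rep_eq blinfun.add_right)
  also have "\<dots> = (norm (K \<psi>))\<^sup>2 + (norm w)\<^sup>2" using nrm i1 by simp
  finally show ?thesis .
qed

theorem corollary3p2:
  fixes K :: "('u::banach \<Rightarrow>\<^sub>L real) \<Rightarrow> 'u"
    and \<Omega> :: "(real ^ 'd) set"
    and Q Qb M MO :: nat
    and L :: "nat \<Rightarrow> 'u \<Rightarrow> real ^ 'd \<Rightarrow> real"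
    and P :: "real list \<Rightarrow> real" and B :: "real list \<Rightarrow> real"
    and PP BB :: "'u \<Rightarrow> real ^ 'd \<Rightarrow> real"
    and f g :: "real ^ 'd \<Rightarrow> real"
    and X :: "nat \<Rightarrow> real ^ 'd"
    and Thinv :: "nat \<times> nat \<Rightarrow> nat \<times> nat \<Rightarrow> real"
    and udag :: 'u
  assumes separable: "\<exists>D::'u set. countable D \<and> closure D = UNIV"
    and K_linear: "linear K" and K_bij: "bij K"
    and K_sym: "\<forall>\<phi> \<psi>. blinfun_apply \<phi> (K \<psi>) = blinfun_apply \<psi> (K \<phi>)"
    and K_pos: "\<forall>\<phi>. \<phi> \<noteq> 0 \<longrightarrow> blinfun_apply \<phi> (K \<phi>) > 0"
    and K_norm: "\<forall>u. (norm u)\<^sup>2 = blinfun_apply (inv K u) u"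
    and \<Omega>_bounded: "bounded \<Omega>"
    and Qb: "1 \<le> Qb" "Qb \<le> Q"
    and L_lin: "\<forall>q\<in>{1..Q}. \<forall>x. linear (\<lambda>u. L q u x)"
    and L_cont: "\<forall>q\<in>{1..Q}. \<forall>u. continuous_on \<Omega> (L q u)"
    and L_bdd: "\<forall>q\<in>{1..Q}. \<exists>C. \<forall>u. \<forall>x\<in>\<Omega>. \<bar>L q u x\<bar> \<le> C * norm u"
    and L_cont_bd: "\<forall>q\<in>{1..Qb}. \<forall>u. continuous_on (frontier \<Omega>) (L q u)"
    and L_bdd_bd: "\<forall>q\<in>{1..Qb}. \<exists>C. \<forall>u. \<forall>x\<in>frontier \<Omega>. \<bar>L q u x\<bar> \<le> C * norm u"
    and PP_def: "\<forall>u. \<forall>x\<in>\<Omega>. PP u x = P (map (\<lambda>q. L q u x) [1..<Q+1])"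
    and BB_def: "\<forall>u. \<forall>x\<in>frontier \<Omega>. BB u x = B (map (\<lambda>q. L q u x) [1..<Qb+1])"
    and MO_le: "MO \<le> M"
    and X_int: "\<forall>m\<in>{1..MO}. X m \<in> \<Omega>"
    and X_bd: "\<forall>m\<in>{MO<..M}. X m \<in> frontier \<Omega>"
    and Theta_inv_left: "\<forall>i\<in>colloc_idx Q Qb M MO. \<forall>j\<in>colloc_idx Q Qb M MO.
        (\<Sum>k\<in>colloc_idx Q Qb M MO. Thinv i k * Theta K (colloc_phi L X) k j) = (if i = j then 1 else 0)"
    and Theta_inv_right: "\<forall>i\<in>colloc_idx Q Qb M MO. \<forall>j\<in>colloc_idx Q Qb M MO.
        (\<Sum>k\<in>colloc_idx Q Qb M MO. Theta K (colloc_phi L X) i k * Thinv k j) = (if i = j then 1 else 0)"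
  shows "((\<forall>m\<in>{1..MO}. PP udag (X m) = f (X m)) \<and> (\<forall>m\<in>{MO<..M}. BB udag (X m) = g (X m)) \<and>
          (\<forall>u. (\<forall>m\<in>{1..MO}. PP u (X m) = f (X m)) \<and> (\<forall>m\<in>{MO<..M}. BB u (X m) = g (X m))
               \<longrightarrow> norm udag \<le> norm u))
     \<longleftrightarrow>
         (\<exists>z. F_eq_y P B Q Qb M MO (ydata f g X MO) z \<and>
              (\<forall>z'. F_eq_y P B Q Qb M MO (ydata f g X MO) z' \<longrightarrow>
                    quad_form (colloc_idx Q Qb M MO) Thinv z \<le> quad_form (colloc_idx Q Qb M MO) Thinv z') \<and>
              udag = (\<Sum>n\<in>colloc_idx Q Qb M MO. z n *\<^sub>R gamblet (colloc_idx Q Qb M MO) K (colloc_phi L X) Thinv n))"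
proof -
  define I where "I = colloc_idx Q Qb M MO"
  define \<phi> where "\<phi> = colloc_phi L X"
  define Phi where "Phi u = (\<lambda>i. blinfun_apply (\<phi> i) u)" for u
  define \<psi> where "\<psi> z = (\<Sum>n\<in>I. \<Sum>k\<in>I. (z n * Thinv n k) *\<^sub>R \<phi> k)" for z
  define U where "U z = (\<Sum>n\<in>I. z n *\<^sub>R gamblet I K \<phi> Thinv n)" for z
  define feas where "feas u \<longleftrightarrow> (\<forall>m\<in>{1..MO}. PP u (X m) = f (X m)) \<and> (\<forall>m\<in>{MO<..M}. BB u (X m) = g (X m))" for u
  define Fy where "Fy = F_eq_y P B Q Qb M MO (ydata f g X MO)"
  have finI: "finite I"
  proof -
    have "I \<subseteq> {1..Q} \<times> {1..M}" using MO_le Qb unfolding I_def colloc_idx_def by auto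
    thus ?thesis by (rule finite_subset) simp
  qed
  have phi_app: "blinfun_apply (\<phi> (q,m)) u = L q u (X m)" if qm: "(q,m) \<in> I" for q m u
  proof -
    have q: "q \<in> {1..Q}" using qm Qb unfolding I_def colloc_idx_def by auto
    have lq: "linear (\<lambda>u. L q u (X m))" using L_lin q by blast
    obtain C where C: "\<forall>u. \<bar>L q u (X m)\<bar> \<le> C * norm u"
    proof (cases "m \<le> MO")
      case True
      hence "X m \<in> \<Omega>" using X_int qm unfolding I_def colloc_idx_def by auto
      thus ?thesis using L_bdd q that by blast
    next
      case False
      hence "X m \<in> frontier \<Omega>" "q \<in> {1..Qb}" using X_bd qm unfolding I_def colloc_idx_def by auto
      thus ?thesis using L_bdd_bd that by blast
    qed
    have "bounded_linear (\<lambda>u. L q u (X m))"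
    proof (rule bounded_linear_intro[where K=C])
      show "L q (x + y) (X m) = L q x (X m) + L q y (X m)" for x y using linear_add[OF lq, of x y] by simp
      show "L q (r *\<^sub>R x) (X m) = r *\<^sub>R L q x (X m)" for r x using linear_scale[OF lq, of r x] by simp
      show "norm (L q x (X m)) \<le> norm x * C" for x using C by (simp add: mult.commute)
    qed
    thus ?thesis unfolding \<phi>_def colloc_phi_def by (simp add: bounded_linear_Blinfun_apply)
  qed
  have U_eq: "U z = K (\<psi> z)" for z
    unfolding U_def \<psi>_def gamblet_def
    by (simp add: linear_sum[OF K_linear] linear_scale[OF K_linear] scaleR_sum_right o_def)
  have PhiU: "Phi (U z) i = z i" if i: "i \<in> I" for z i
  proof -
    have "Phi (U z) i = blinfun_apply (\<psi> z) (K (\<phi> i))"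
      unfolding Phi_def U_eq using K_sym by simp
    also have "\<dots> = (\<Sum>n\<in>I. z n * (\<Sum>k\<in>I. Thinv n k * Theta K \<phi> k i))"
      unfolding \<psi>_def Theta_def
      by (simp add: blinfun.sum_left blinfun.scaleR_left sum_distrib_left mult.assoc)
    also have "\<dots> = (\<Sum>n\<in>I. z n * (if n = i then 1 else 0))"
      using Theta_inv_left i unfolding I_def \<phi>_def by (intro sum.cong) auto
    also have "\<dots> = z i" using i finI by (simp add: if_distrib sum.delta' cong: if_cong)
    finally show ?thesis .
  qed
  have normU: "(norm (U z))\<^sup>2 = quad_form I Thinv z" for z
  proof -
    have i1: "inv K (K a) = a" for a using K_bij by (simp add: bij_is_inj)
    have "(norm (U z))\<^sup>2 = blinfun_apply (\<psi> z) (U z)" using K_norm i1[of "\<psi> z"] U_eq[of z] by simp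
    also have "\<dots> = (\<Sum>n\<in>I. \<Sum>k\<in>I. z n * Thinv n k * Phi (U z) k)"
      unfolding \<psi>_def Phi_def by (simp add: blinfun.sum_left blinfun.scaleR_left)
    also have "\<dots> = quad_form I Thinv z" unfolding quad_form_def using PhiU
      by (intro sum.cong) auto
    finally show ?thesis .
  qed
  have decomp: "(norm u)\<^sup>2 = quad_form I Thinv (Phi u) + (norm (u - U (Phi u)))\<^sup>2" for u
  proof -
    have w0: "blinfun_apply (\<psi> (Phi u)) (u - U (Phi u)) = 0"
    proof -
      have "blinfun_apply (\<phi> k) (u - U (Phi u)) = 0" if "k \<in> I" for k
        using PhiU[OF that, of "Phi u"] unfolding Phi_def by (simp add: blinfun.diff_right)
      thus ?thesis unfolding \<psi>_def by (simp add: blinfun.sum_left blinfun.scaleR_left)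
    qed
    have "u = K (\<psi> (Phi u)) + (u - U (Phi u))" using U_eq by simp
    hence "(norm u)\<^sup>2 = (norm (K (\<psi> (Phi u))))\<^sup>2 + (norm (u - U (Phi u)))\<^sup>2"
      using pyth[OF K_linear K_bij K_sym K_norm w0] by simp
    thus ?thesis using normU[of "Phi u"] U_eq[of "Phi u"] by simp
  qed
  have Fcong: "Fy z = Fy z'" if zz: "\<forall>i\<in>I. z i = z' i" for z z'
  proof -
    have "Fmap P B Q Qb MO z m = Fmap P B Q Qb MO z' m" if m: "m \<in> {1..M}" for m
    proof (cases "m \<le> MO")
      case True
      have "\<forall>q\<in>set [1..<Q+1]. (q,m) \<in> I" using m True unfolding I_def colloc_idx_def by auto
      hence "map (\<lambda>q. z (q,m)) [1..<Q+1] = map (\<lambda>q. z' (q,m)) [1..<Q+1]"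
        using zz by (intro map_cong refl) blast
      moreover have "Fmap P B Q Qb MO z m = P (map (\<lambda>q. z (q,m)) [1..<Q+1])"
        "Fmap P B Q Qb MO z' m = P (map (\<lambda>q. z' (q,m)) [1..<Q+1])"
        using True unfolding Fmap_def by (simp_all del: upt_Suc)
      ultimately show ?thesis by (simp only:)
    next
      case False
      have "\<forall>q\<in>set [1..<Qb+1]. (q,m) \<in> I" using m False unfolding I_def colloc_idx_def by auto
      hence "map (\<lambda>q. z (q,m)) [1..<Qb+1] = map (\<lambda>q. z' (q,m)) [1..<Qb+1]"
        using zz by (intro map_cong refl) blast
      moreover have "Fmap P B Q Qb MO z m = B (map (\<lambda>q. z (q,m)) [1..<Qb+1])"
        "Fmap P B Q Qb MO z' m = B (map (\<lambda>q. z' (q,m)) [1..<Qb+1])"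
        using False unfolding Fmap_def by (simp_all del: upt_Suc)
      ultimately show ?thesis by (simp only:)
    qed
    thus ?thesis unfolding Fy_def F_eq_y_def by simp
  qed
  have feasF: "feas u \<longleftrightarrow> Fy (Phi u)" for u
  proof -
    have A: "PP u (X m) = Fmap P B Q Qb MO (Phi u) m" if m: "m \<in> {1..MO}" for m
    proof -
      have "\<forall>q\<in>set [1..<Q+1]. (q,m) \<in> I" using m MO_le unfolding I_def colloc_idx_def by auto
      hence "map (\<lambda>q. L q u (X m)) [1..<Q+1] = map (\<lambda>q. Phi u (q, m)) [1..<Q+1]"
        using phi_app unfolding Phi_def by (auto intro!: map_cong)
      moreover have "PP u (X m) = P (map (\<lambda>q. L q u (X m)) [1..<Q+1])" using PP_def X_int m by blast
      moreover have "Fmap P B Q Qb MO (Phi u) m = P (map (\<lambda>q. Phi u (q, m)) [1..<Q+1])"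
        using m unfolding Fmap_def by (simp del: upt_Suc)
      ultimately show ?thesis by (simp only:)
    qed
    have Bq: "BB u (X m) = Fmap P B Q Qb MO (Phi u) m" if m: "m \<in> {MO<..M}" for m
    proof -
      have "\<forall>q\<in>set [1..<Qb+1]. (q,m) \<in> I" using m Qb unfolding I_def colloc_idx_def by auto
      hence "map (\<lambda>q. L q u (X m)) [1..<Qb+1] = map (\<lambda>q. Phi u (q, m)) [1..<Qb+1]"
        using phi_app unfolding Phi_def by (auto intro!: map_cong)
      moreover have "BB u (X m) = B (map (\<lambda>q. L q u (X m)) [1..<Qb+1])" using BB_def X_bd m by blast
      moreover have "Fmap P B Q Qb MO (Phi u) m = B (map (\<lambda>q. Phi u (q, m)) [1..<Qb+1])"
        using m unfolding Fmap_def by (simp del: upt_Suc)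
      ultimately show ?thesis by (simp only:)
    qed
    have split: "{1..M} = {1..MO} \<union> {MO<..M}" using MO_le by auto
    show ?thesis unfolding feas_def Fy_def F_eq_y_def split ydata_def using A Bq
      by auto
  qed
  have feasU: "feas (U z) \<longleftrightarrow> Fy z" for z
  proof -
    have "Fy (Phi (U z)) = Fy z" using Fcong PhiU by blast
    thus ?thesis using feasF[of "U z"] by simp
  qed
  have UPhi: "U (Phi u) = u" if "feas u" "\<forall>v. feas v \<longrightarrow> norm u \<le> norm v" for u
  proof -
    have "feas (U (Phi u))" using feasF[of u] feasU[of "Phi u"] that by simp
    hence "norm u \<le> norm (U (Phi u))" using that by blast
    hence "(norm u)\<^sup>2 \<le> (norm (U (Phi u)))\<^sup>2" by (simp add: power_mono)
    hence "(norm (u - U (Phi u)))\<^sup>2 \<le> 0" using decomp[of u] normU by simp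
    thus ?thesis by simp
  qed
  have goal: "(feas udag \<and> (\<forall>u. feas u \<longrightarrow> norm udag \<le> norm u)) \<longleftrightarrow>
     (\<exists>z. Fy z \<and> (\<forall>z'. Fy z' \<longrightarrow> quad_form I Thinv z \<le> quad_form I Thinv z') \<and> udag = U z)"
  proof
    assume H: "feas udag \<and> (\<forall>u. feas u \<longrightarrow> norm udag \<le> norm u)"
    show "\<exists>z. Fy z \<and> (\<forall>z'. Fy z' \<longrightarrow> quad_form I Thinv z \<le> quad_form I Thinv z') \<and> udag = U z"
    proof (intro exI conjI allI impI)
      show "Fy (Phi udag)" using H feasF[of udag] by simp
      show "udag = U (Phi udag)" using H UPhi[of udag] by simp
      fix z' assume "Fy z'"
      hence "feas (U z')" using feasU[of z'] by simp
      hence "norm udag \<le> norm (U z')" using H by blast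
      hence "(norm udag)\<^sup>2 \<le> (norm (U z'))\<^sup>2" by (simp add: power_mono)
      moreover have "(norm udag)\<^sup>2 = quad_form I Thinv (Phi udag)"
        using normU[of "Phi udag"] H UPhi[of udag] by simp
      ultimately show "quad_form I Thinv (Phi udag) \<le> quad_form I Thinv z'" using normU[of z'] by simp
    qed
  next
    assume "\<exists>z. Fy z \<and> (\<forall>z'. Fy z' \<longrightarrow> quad_form I Thinv z \<le> quad_form I Thinv z') \<and> udag = U z"
    then obtain z where z: "Fy z" "\<forall>z'. Fy z' \<longrightarrow> quad_form I Thinv z \<le> quad_form I Thinv z'" "udag = U z"
      by blast
    show "feas udag \<and> (\<forall>u. feas u \<longrightarrow> norm udag \<le> norm u)"
    proof (intro conjI allI impI)
      show "feas udag" using z(1,3) feasU[of z] by simp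
      fix u assume "feas u"
      hence "quad_form I Thinv z \<le> quad_form I Thinv (Phi u)" using z(2) feasF[of u] by simp
      also have "\<dots> \<le> (norm u)\<^sup>2" using decomp[of u] by simp
      finally have "(norm udag)\<^sup>2 \<le> (norm u)\<^sup>2" using normU[of z] z(3) by simp
      thus "norm udag \<le> norm u" by (rule power2_le_imp_le) simp
    qed
  qed
  show ?thesis using goal unfolding feas_def Fy_def U_def I_def \<phi>_def by simp
qed

end
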